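(* Let $n\ge1$ and let $\mathcal{P}$ be a finite index set of pairs $(i,j)$. For each $(i,j)\in\mathcal{P}$ let $H^{[ij]}\in\mathbb{R}^{n\times n}$ be symmetric positive semidefinite, let $c^{[ij]}\in\mathbb{R}^n$ lie in the column space of $H^{[ij]}$, let $h^{[ij]}\in\mathbb{R}$, and let $w_{ij}\ge 0$. Define $$\mathfrak{B}^{[ij]}(\mathbf{u})=\exp\!\big(-\mathbf{u}^\top H^{[ij]}\mathbf{u}-(c^{[ij]})^\top\mathbf{u}-h^{[ij]}\big),\qquad F(\mathbf{u})=\sum_{(i,j)\in\mathcal{P}} w_{ij}\,\mathfrak{B}^{[ij]}(\mathbf{u}),$$ and $$D_{ij}=\left\{\mathbf{u}:\ \mathbf{u}^\top H^{[ij]}\mathbf{u}+(c^{[ij]})^\top\mathbf{u}+\tfrac14 (c^{[ij]})^\top (H^{[ij]})^{+}c^{[ij]}\le\tfrac12\right\},$$ where $(H^{[ij]})^{+}$ is the Moore–Penrose pseudoinverse. Let $\mathcal{U}\subset\mathbb{R}^n$ be a bounded polytope (the convex hull of finitely many vertices). If every vertex of $\mathcal{U}$ belongs to $D_{ij}$ for every $(i,j)\in\mathcal{P}$, then $F$ is concave on $\mathcal{U}$.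
   Context: In the application, the weights are $w_{ij}=\sqrt{P_k(M^{[i]})P_k(M^{[j]})}$ (products of current model probabilities), $F$ is the upper bound on the predicted misdiagnosis probability as a function of the stacked future input $\mathbf{u}$, and $\mathcal{U}$ is a polytopic input constraint set. *)

theory Defs
  imports "HOL-Analysis.Analysis"
begin

definition is_pinv :: "real^'n^'n \<Rightarrow> real^'n^'n \<Rightarrow> bool" where
  "is_pinv A X \<longleftrightarrow> A ** X ** A = A \<and> X ** A ** X = X
     \<and> transpose (A ** X) = A ** X \<and> transpose (X ** A) = X ** A"

definition pinv :: "real^'n^'n \<Rightarrow> real^'n^'n" where
  "pinv A = (THE X. is_pinv A X)"

definition psd :: "real^'n^'n \<Rightarrow> bool" where
  "psd A \<longleftrightarrow> (\<forall>x. 0 \<le> x \<bullet> (A *v x))"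

definition Bfun :: "real^'n^'n \<Rightarrow> real^'n \<Rightarrow> real \<Rightarrow> real^'n \<Rightarrow> real" where
  "Bfun H c h u = exp (- (u \<bullet> (H *v u)) - c \<bullet> u - h)"

definition Ffun :: "'p set \<Rightarrow> ('p \<Rightarrow> real) \<Rightarrow> ('p \<Rightarrow> real^'n^'n) \<Rightarrow> ('p \<Rightarrow> real^'n)
    \<Rightarrow> ('p \<Rightarrow> real) \<Rightarrow> real^'n \<Rightarrow> real" where
  "Ffun P w H c h u = (\<Sum>p\<in>P. w p * Bfun (H p) (c p) (h p) u)"

definition Dset :: "real^'n^'n \<Rightarrow> real^'n \<Rightarrow> (real^'n) set" where
  "Dset H c = {u. u \<bullet> (H *v u) + c \<bullet> u + (1/4) * (c \<bullet> (pinv H *v c)) \<le> 1/2}"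

end

theory Submission
  imports Defs
begin


lemma inner_eq_allI:
  fixes a b :: "'a::real_inner"
  assumes "\<And>y. a \<bullet> y = b \<bullet> y" shows "a = b"
proof -
  have "(a - b) \<bullet> (a - b) = 0" using assms[of "a-b"] by (simp add: inner_diff_left)
  then show ?thesis by simp
qed

lemma sym_inner:
  fixes H :: "real^'n^'n"
  assumes "transpose H = H"
  shows "x \<bullet> (H *v y) = (H *v x) \<bullet> y"
  by (metis assms dot_lmul_matrix transpose_matrix_vector)

lemma sym_intro:
  fixes A :: "real^'n^'n"
  assumes "\<And>x y. (A *v x) \<bullet> y = x \<bullet> (A *v y)"
  shows "transpose A = A"
proof -
  have "transpose A *v x = A *v x" for x
    by (rule inner_eq_allI) (simp add: dot_lmul_matrix assms)
  then show ?thesis by (simp add: matrix_eq)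
qed

lemma pinv_unique:
  fixes A X Y :: "real^'n^'n"
  assumes X: "is_pinv A X" and Y: "is_pinv A Y"
  shows "X = Y"
proof -
  have x1: "A ** X ** A = A" and x2: "X ** A ** X = X" and x3: "transpose (A ** X) = A ** X"
    and x4: "transpose (X ** A) = X ** A" using X by (auto simp: is_pinv_def)
  have y1: "A ** Y ** A = A" and y2: "Y ** A ** Y = Y" and y3: "transpose (A ** Y) = A ** Y"
    and y4: "transpose (Y ** A) = Y ** A" using Y by (auto simp: is_pinv_def)
  have tA: "transpose A = transpose A ** transpose Y ** transpose A"
    by (metis y1 matrix_transpose_mul matrix_mul_assoc)
  have "X = X ** (A ** X)" using x2 by (simp add: matrix_mul_assoc)
  also have "\<dots> = X ** (transpose X ** transpose A)" by (metis x3 matrix_transpose_mul)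
  also have "\<dots> = X ** (transpose X ** (transpose A ** transpose Y ** transpose A))" using tA by simp
  also have "\<dots> = X ** (transpose (A ** X) ** transpose (A ** Y))"
    by (simp add: matrix_transpose_mul matrix_mul_assoc)
  also have "\<dots> = (X ** A ** X) ** A ** Y" by (simp add: x3 y3 matrix_mul_assoc)
  finally have eX: "X = X ** A ** Y" using x2 by simp
  have "Y = (Y ** A) ** Y" using y2 by simp
  also have "\<dots> = (transpose A ** transpose Y) ** Y" by (metis y4 matrix_transpose_mul)
  also have "\<dots> = ((transpose A ** transpose X ** transpose A) ** transpose Y) ** Y"
    by (metis x1 matrix_transpose_mul matrix_mul_assoc)
  also have "\<dots> = (transpose (X ** A) ** transpose (Y ** A)) ** Y"
    by (simp add: matrix_transpose_mul matrix_mul_assoc)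
  also have "\<dots> = X ** A ** (Y ** A ** Y)" by (simp add: x4 y4 matrix_mul_assoc)
  finally have "Y = X ** A ** Y" using y2 by simp
  with eX show ?thesis by simp
qed

lemma pinv_exists:
  fixes H :: "real^'n^'n"
  assumes sym: "transpose H = H"
  shows "\<exists>X. is_pinv H X"
proof -
  define V where "V = range (\<lambda>x. H *v x)"
  have subV: "subspace V" unfolding V_def subspace_def
  proof (intro conjI ballI allI)
    show "0 \<in> range ((*v) H)" by (metis matrix_vector_mult_0_right rangeI)
    show "x + y \<in> range ((*v) H)" if "x \<in> range ((*v) H)" "y \<in> range ((*v) H)" for x y
      using that by (auto simp: image_iff) (metis matrix_vector_right_distrib)
    show "c *\<^sub>R x \<in> range ((*v) H)" if "x \<in> range ((*v) H)" for c x
      using that by (auto simp: image_iff) (metis matrix_vector_mult_scaleR)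
  qed
  obtain B where BV: "B \<subseteq> V" and Bo: "pairwise orthogonal B"
    and B1: "\<And>x. x \<in> B \<Longrightarrow> norm x = 1" and Bi: "independent B" and Bs: "span B = V"
    using orthonormal_basis_subspace[OF subV] by metis
  have fB: "finite B" using Bi independent_imp_finite by blast
  define p where "p x = (\<Sum>b\<in>B. (b \<bullet> x) *\<^sub>R b)" for x :: "real^'n"
  have lp: "linear p"
    by (rule linearI) (simp_all add: p_def inner_add_right scaleR_add_left sum.distrib scaleR_sum_right)
  have pV: "p x \<in> V" for x unfolding p_def
    using BV subV by (simp add: subspace_sum subspace_mul subsetD)
  have bb: "b \<bullet> b = 1" if "b \<in> B" for b using B1[OF that] by (simp add: norm_eq_1)
  have bp: "b \<bullet> p x = b \<bullet> x" if "b \<in> B" for b x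
  proof -
    have "b \<bullet> p x = (\<Sum>b'\<in>B. (b' \<bullet> x) * (b \<bullet> b'))" unfolding p_def by (simp add: inner_sum_right)
    also have "\<dots> = (\<Sum>b'\<in>B. if b' = b then b \<bullet> x else 0)"
      apply (rule sum.cong, simp)
      using Bo that bb by (auto simp: pairwise_def orthogonal_def)
    also have "\<dots> = b \<bullet> x" using fB that by simp
    finally show ?thesis .
  qed
  have orth: "(x - p x) \<bullet> v = 0" if "v \<in> V" for x v
  proof -
    have "v \<in> span B" using that Bs by simp
    then show ?thesis
    proof (rule span_induct)
      show "(x - p x) \<bullet> y = 0" if "y \<in> B" for y
        using bp[OF that, of x] by (simp add: inner_diff_left inner_diff_right inner_commute)
      show "subspace {v. (x - p x) \<bullet> v = 0}"
        by (auto simp: subspace_def inner_add_right)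
    qed
  qed
  have padd: "p (a + b) = p a + p b" for a b by (simp add: linear_add[OF lp])
  have pdiff: "p (a - b) = p a - p b" for a b by (simp add: linear_diff[OF lp])
  have pfix: "p v = v" if "v \<in> V" for v
  proof -
    have "v - p v \<in> V" using that pV subV by (simp add: subspace_diff)
    then have "(v - p v) \<bullet> (v - p v) = 0" using orth by blast
    then show ?thesis by simp
  qed
  have pkill: "p w = 0" if "\<And>v. v \<in> V \<Longrightarrow> w \<bullet> v = 0" for w
    unfolding p_def using that BV by (auto simp: inner_commute intro!: sum.neutral)
  have psym: "(p x) \<bullet> y = x \<bullet> p y" for x y
    unfolding p_def by (simp add: inner_sum_left inner_sum_right mult.commute inner_commute)
  have Hs: "x \<bullet> (H *v y) = (H *v x) \<bullet> y" for x y by (rule sym_inner[OF sym])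
  have HV: "H *v x \<in> V" for x unfolding V_def by simp
  have Hker: "H *v w = 0" if "\<And>v. v \<in> V \<Longrightarrow> w \<bullet> v = 0" for w
  proof -
    have "(H *v w) \<bullet> (H *v w) = w \<bullet> (H *v (H *v w))" using Hs by simp
    also have "\<dots> = 0" using that HV by blast
    finally show ?thesis by simp
  qed
  have Hq: "H *v (x - p x) = 0" for x by (rule Hker) (rule orth)
  have Hp: "H *v (p x) = H *v x" for x using Hq[of x] by (simp add: matrix_vector_mult_diff_distrib)
  have pH: "p (H *v x) = H *v x" for x using pfix HV by blast
  have pq: "p (x - p x) = 0" for x by (rule pkill) (rule orth)
  have pp: "p (p x) = p x" for x using pq[of x] pdiff by simp
  define P where "P = matrix p"
  have Pv: "P *v x = p x" for x unfolding P_def using lp by (simp add: matrix_works)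
  define M where "M = H + (mat 1 - P)"
  have Mv: "M *v x = H *v x + (x - p x)" for x
    by (simp add: M_def Pv matrix_vector_mult_add_rdistrib matrix_vector_mult_diff_rdistrib)
  have Minj: "x = 0" if "M *v x = 0" for x
  proof -
    have e: "H *v x + (x - p x) = 0" using that Mv by simp
    have "(H *v x) \<bullet> (H *v x) + (x - p x) \<bullet> (H *v x) = 0"
      using e by (metis inner_add_left inner_zero_left)
    then have h0: "H *v x = 0" using orth[OF HV] by simp
    then have "x = p x" using e by simp
    then have "x \<in> V" using pV by metis
    then obtain u where u: "x = H *v u" unfolding V_def by blast
    have "x \<bullet> x = u \<bullet> (H *v x)" using u Hs by simp
    then show ?thesis using h0 by simp
  qed
  obtain Mi where Mi1: "Mi ** M = mat 1"
    using matrix_left_invertible_ker[of M] Minj by blast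
  then have Mi2: "M ** Mi = mat 1" using matrix_left_right_inverse by blast
  have MiM: "Mi *v (M *v x) = x" for x using Mi1 by (simp add: matrix_vector_mul_assoc)
  have MMi: "M *v (Mi *v x) = x" for x using Mi2 by (simp add: matrix_vector_mul_assoc)
  have MiH: "Mi *v (H *v v) = p v" for v
  proof -
    have "M *v (p v) = H *v v" using Mv[of "p v"] Hp pp by simp
    then show ?thesis using MiM by metis
  qed
  define X where "X = Mi - (mat 1 - P)"
  have Xv: "X *v y = Mi *v y - (y - p y)" for y
    by (simp add: X_def Pv matrix_vector_mult_diff_rdistrib)
  have Xp: "X *v y = p (Mi *v y)" for y
  proof -
    define m where "m = Mi *v y"
    have y0: "y = M *v m" using MMi[of y] unfolding m_def by simp
    have y: "y = H *v m + (m - p m)" using y0 Mv[of m] by metis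
    have "p y = H *v m" unfolding y by (simp only: padd pH pq) simp
    then show ?thesis unfolding Xv m_def[symmetric] using y by simp
  qed
  have HXv: "H *v (X *v y) = p y" for y
  proof -
    define m where "m = Mi *v y"
    have y0: "y = M *v m" using MMi[of y] unfolding m_def by simp
    have y: "y = H *v m + (m - p m)" using y0 Mv[of m] by metis
    have "p y = H *v m" unfolding y by (simp only: padd pH pq) simp
    then show ?thesis unfolding Xp m_def[symmetric] Hp by simp
  qed
  have XHv: "X *v (H *v y) = p y" for y using Xp MiH pp by simp
  have "is_pinv H X" unfolding is_pinv_def
  proof (intro conjI)
    show "H ** X ** H = H" unfolding matrix_eq
      by (simp only: matrix_vector_mul_assoc[symmetric] XHv Hp) simp
    show "X ** H ** X = X" unfolding matrix_eq
      by (simp only: matrix_vector_mul_assoc[symmetric] XHv) (simp add: Xp pp)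
    show "transpose (H ** X) = H ** X"
      by (rule sym_intro) (simp only: matrix_vector_mul_assoc[symmetric] HXv psym)
    show "transpose (X ** H) = X ** H"
      by (rule sym_intro) (simp only: matrix_vector_mul_assoc[symmetric] XHv psym)
  qed
  then show ?thesis by blast
qed

lemma pinv_is_pinv:
  fixes H :: "real^'n^'n"
  assumes "transpose H = H"
  shows "is_pinv H (pinv H)"
  unfolding pinv_def
  using pinv_exists[OF assms] pinv_unique by (metis theI)



lemma sym_comm:
  fixes H :: "real^'n^'n"
  assumes "transpose H = H"
  shows "x \<bullet> (H *v y) = y \<bullet> (H *v x)"
  by (metis assms sym_inner inner_commute)

lemma quad_add:
  fixes H :: "real^'n^'n"
  assumes "transpose H = H"
  shows "(a + b) \<bullet> (H *v (a + b)) = a \<bullet> (H *v a) + 2 * (a \<bullet> (H *v b)) + b \<bullet> (H *v b)"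
  using sym_comm[OF assms, of b a]
  by (simp add: matrix_vector_right_distrib inner_add_left inner_add_right)

lemma quad_scale:
  fixes H :: "real^'n^'n"
  shows "(t *\<^sub>R a) \<bullet> (H *v (s *\<^sub>R b)) = t * s * (a \<bullet> (H *v b))"
  by (simp add: matrix_vector_mult_scaleR)

lemma psd_CS:
  fixes H :: "real^'n^'n"
  assumes sym: "transpose H = H" and psd: "psd H"
  shows "(v \<bullet> (H *v d))^2 \<le> (v \<bullet> (H *v v)) * (d \<bullet> (H *v d))"
proof -
  define A where "A = v \<bullet> (H *v v)"
  define B where "B = v \<bullet> (H *v d)"
  define C where "C = d \<bullet> (H *v d)"
  have q: "0 \<le> A + 2 * t * B + t^2 * C" for t
  proof -
    have "0 \<le> (v + t *\<^sub>R d) \<bullet> (H *v (v + t *\<^sub>R d))" using psd by (simp add: psd_def)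
    also have "\<dots> = A + 2 * t * B + t^2 * C"
    proof -
      have s1: "v \<bullet> (H *v (t *\<^sub>R d)) = t * B" unfolding B_def
        by (simp add: matrix_vector_mult_scaleR)
      have s2: "(t *\<^sub>R d) \<bullet> (H *v (t *\<^sub>R d)) = t^2 * C" unfolding C_def
        by (simp add: matrix_vector_mult_scaleR power2_eq_square)
      show ?thesis unfolding quad_add[OF sym] s1 s2 A_def by simp
    qed
    finally show ?thesis .
  qed
  have C0: "0 \<le> C" using psd by (simp add: psd_def C_def)
  show ?thesis
  proof (cases "C = 0")
    case True
    have "B = 0"
    proof (rule ccontr)
      assume "B \<noteq> 0"
      have "0 \<le> A + 2 * (-(A+1)/(2*B)) * B" using q[of "-(A+1)/(2*B)"] True by simp
      also have "\<dots> = -1" using \<open>B \<noteq> 0\<close> by (simp add: field_simps)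
      finally show False by simp
    qed
    then show ?thesis using True by (simp add: B_def C_def)
  next
    case False
    then have Cp: "C > 0" using C0 by simp
    have "0 \<le> A + 2 * (-B/C) * B + (-B/C)^2 * C" by (rule q)
    also have "\<dots> = A - B^2 / C" using Cp by (simp add: field_simps power2_eq_square)
    finally have "B^2 / C \<le> A" by simp
    then have "B^2 \<le> A * C" using Cp by (simp add: divide_le_eq)
    then show ?thesis by (simp add: A_def B_def C_def)
  qed
qed

lemma B_concave:
  fixes H :: "real^'n^'n"
  assumes sym: "transpose H = H" and psd: "psd H" and cz: "c = H *v z"
    and conv: "convex S"
    and inS: "\<And>u. u \<in> S \<Longrightarrow> (2 *\<^sub>R u + z) \<bullet> (H *v (2 *\<^sub>R u + z)) \<le> 2"
  shows "concave_on S (Bfun H c h)"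
proof -
  have key: "(1 - t) * Bfun H c h x + t * Bfun H c h y \<le> Bfun H c h ((1 - t) *\<^sub>R x + t *\<^sub>R y)"
    if xS: "x \<in> S" and yS: "y \<in> S" and t0: "0 \<le> t" and t1: "t \<le> 1" for x y t
  proof -
    define d where "d = y - x"
    define a where "a = d \<bullet> (H *v d)"
    define b where "b = 2 * (x \<bullet> (H *v d)) + c \<bullet> d"
    define e where "e = x \<bullet> (H *v x) + c \<bullet> x + h"
    define g where "g s = exp (-(a * s^2 + b * s + e))" for s :: real
    define g' where "g' s = -(2 * a * s + b) * g s" for s
    define g'' where "g'' s = ((2 * a * s + b)^2 - 2*a) * g s" for s
    have geq: "Bfun H c h (x + s *\<^sub>R d) = g s" for s
    proof -
      have s1: "x \<bullet> (H *v (s *\<^sub>R d)) = s * (x \<bullet> (H *v d))"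
        by (simp add: matrix_vector_mult_scaleR)
      have s2: "(s *\<^sub>R d) \<bullet> (H *v (s *\<^sub>R d)) = s^2 * a" unfolding a_def
        by (simp add: matrix_vector_mult_scaleR power2_eq_square)
      have "(x + s *\<^sub>R d) \<bullet> (H *v (x + s *\<^sub>R d)) + c \<bullet> (x + s *\<^sub>R d) + h = a * s^2 + b * s + e"
        unfolding quad_add[OF sym] s1 s2 b_def e_def by (simp add: inner_add_right algebra_simps)
      then show ?thesis unfolding Bfun_def g_def by (simp add: algebra_simps)
    qed
    have d1: "(g has_real_derivative g' s) (at s)" for s
    proof -
      have "((\<lambda>s. -(a * s^2 + b * s + e)) has_real_derivative -(2 * a * s + b)) (at s)"
        by (auto intro!: derivative_eq_intros simp: algebra_simps)
      from DERIV_fun_exp[OF this] show ?thesis unfolding g_def[abs_def] g'_def g_def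
        by (simp add: mult.commute)
    qed
    have d2: "(g' has_real_derivative g'' s) (at s)" for s
    proof -
      have "((\<lambda>s. -(2 * a * s + b) * g s) has_real_derivative (-(2*a)) * g s + (-(2 * a * s + b)) * g' s) (at s)"
        by (auto intro!: derivative_eq_intros d1 simp: algebra_simps)
      moreover have "(-(2*a)) * g s + (-(2 * a * s + b)) * g' s = g'' s"
        unfolding g'_def g''_def by (simp add: algebra_simps power2_eq_square)
      ultimately show ?thesis unfolding g'_def[abs_def] by simp
    qed
    have d3: "g'' s \<le> 0" if "s \<in> {0..1}" for s
    proof -
      define u where "u = x + s *\<^sub>R d"
      have "u = (1 - s) *\<^sub>R x + s *\<^sub>R y" unfolding u_def d_def by (simp add: algebra_simps)
      then have uS: "u \<in> S" using conv xS yS that by (simp add: convex_alt)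
      have lin: "2 * a * s + b = (2 *\<^sub>R u + z) \<bullet> (H *v d)"
      proof -
        have "c \<bullet> d = z \<bullet> (H *v d)" using cz sym_comm[OF sym, of z d] by (simp add: inner_commute)
        then show ?thesis unfolding u_def a_def b_def
          by (simp add: inner_add_left algebra_simps)
      qed
      have a0: "0 \<le> a" using psd by (simp add: psd_def a_def)
      have "(2 * a * s + b)^2 \<le> ((2 *\<^sub>R u + z) \<bullet> (H *v (2 *\<^sub>R u + z))) * a"
        unfolding lin unfolding a_def by (rule psd_CS[OF sym psd])
      also have "\<dots> \<le> 2 * a" using inS[OF uS] a0 by (simp add: mult_right_mono)
      finally have "(2 * a * s + b)^2 - 2*a \<le> 0" by simp
      moreover have "g s > 0" unfolding g_def by simp
      ultimately show ?thesis unfolding g''_def by (simp add: mult_nonpos_nonneg)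
    qed
    have cg: "concave_on {0..1} g"
      by (rule f''_le0_imp_concave[where f'=g' and f''=g'']) (auto intro: d1 d2 d3)
    have "(1 - t) * g 0 + t * g 1 \<le> g ((1 - t) *\<^sub>R 0 + t *\<^sub>R 1)"
      using concave_onD[OF cg, of t 0 1] t0 t1 by simp
    moreover have "g 0 = Bfun H c h x" using geq[of 0] by simp
    moreover have "g 1 = Bfun H c h y" using geq[of 1] by (simp add: d_def)
    moreover have "g t = Bfun H c h ((1 - t) *\<^sub>R x + t *\<^sub>R y)"
      using geq[of t] by (simp add: d_def algebra_simps)
    ultimately show ?thesis by simp
  qed
  show ?thesis unfolding concave_on_iff
  proof (intro conjI conv ballI allI impI)
    fix x y and u v :: real
    assume "x \<in> S" "y \<in> S" "0 \<le> u" "0 \<le> v" "u + v = 1"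
    then show "u * Bfun H c h x + v * Bfun H c h y \<le> Bfun H c h (u *\<^sub>R x + v *\<^sub>R y)"
      using key[of x y v] by (simp add: eq_diff_eq[symmetric])
  qed
qed

lemma E_convex:
  fixes H :: "real^'n^'n"
  assumes sym: "transpose H = H" and psd: "psd H"
  shows "convex {u. (2 *\<^sub>R u + z) \<bullet> (H *v (2 *\<^sub>R u + z)) \<le> 2}"
  unfolding convex_def
proof (intro ballI allI impI, simp only: mem_Collect_eq)
  fix x y and u v :: real
  assume hx: "(2 *\<^sub>R x + z) \<bullet> (H *v (2 *\<^sub>R x + z)) \<le> 2"
    and hy: "(2 *\<^sub>R y + z) \<bullet> (H *v (2 *\<^sub>R y + z)) \<le> 2"
    and u0: "0 \<le> u" and v0: "0 \<le> v" and uv: "u + v = 1"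
  define a where "a = 2 *\<^sub>R x + z"
  define b where "b = 2 *\<^sub>R y + z"
  have e: "2 *\<^sub>R (u *\<^sub>R x + v *\<^sub>R y) + z = u *\<^sub>R a + v *\<^sub>R b"
  proof -
    have "z = u *\<^sub>R z + v *\<^sub>R z" using uv by (metis scaleR_add_left scaleR_one)
    then show ?thesis unfolding a_def b_def by (simp add: algebra_simps)
  qed
  define fa where "fa = a \<bullet> (H *v a)"
  define fb where "fb = b \<bullet> (H *v b)"
  define m where "m = a \<bullet> (H *v b)"
  have q1: "(u *\<^sub>R a + v *\<^sub>R b) \<bullet> (H *v (u *\<^sub>R a + v *\<^sub>R b)) = u^2 * fa + 2 * u * v * m + v^2 * fb"
    unfolding quad_add[OF sym] fa_def fb_def m_def
    by (simp add: matrix_vector_mult_scaleR power2_eq_square)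
  have q2: "(a + (-1) *\<^sub>R b) \<bullet> (H *v (a + (-1) *\<^sub>R b)) = fa - 2 * m + fb"
    unfolding quad_add[OF sym] fa_def fb_def m_def
    using matrix_vector_mult_diff_distrib[of H 0 b] by (simp add: matrix_vector_mult_scaleR)
  have "0 \<le> fa - 2 * m + fb" using psd unfolding psd_def q2[symmetric] by blast
  then have "0 \<le> u * v * (fa - 2 * m + fb)" using u0 v0 by simp
  moreover have "u * fa + v * fb - (u^2 * fa + 2 * u * v * m + v^2 * fb) = u * v * (fa - 2 * m + fb)"
  proof -
    have vv: "v = 1 - u" using uv by simp
    show ?thesis unfolding vv by (simp add: algebra_simps power2_eq_square)
  qed
  ultimately have "u^2 * fa + 2 * u * v * m + v^2 * fb \<le> u * fa + v * fb" by linarith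
  also have "\<dots> \<le> u * 2 + v * 2" using hx hy u0 v0 unfolding fa_def fb_def a_def b_def
    by (intro add_mono mult_left_mono) auto
  finally show "(2 *\<^sub>R (u *\<^sub>R x + v *\<^sub>R y) + z) \<bullet> (H *v (2 *\<^sub>R (u *\<^sub>R x + v *\<^sub>R y) + z)) \<le> 2"
    unfolding e q1 using uv by simp
qed


theorem mainTheorem2:
  fixes P :: "('k \<times> 'k) set"
    and H :: "'k \<times> 'k \<Rightarrow> real^'n^'n"
    and c :: "'k \<times> 'k \<Rightarrow> real^'n"
    and h :: "'k \<times> 'k \<Rightarrow> real"
    and w :: "'k \<times> 'k \<Rightarrow> real"
    and U :: "(real^'n) set"
  assumes "finite P"
    and "\<And>p. p \<in> P \<Longrightarrow> transpose (H p) = H p"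
    and "\<And>p. p \<in> P \<Longrightarrow> psd (H p)"
    and "\<And>p. p \<in> P \<Longrightarrow> c p \<in> range (\<lambda>z. H p *v z)"
    and "\<And>p. p \<in> P \<Longrightarrow> 0 \<le> w p"
    and "polytope U"
    and "\<And>v p. v extreme_point_of U \<Longrightarrow> p \<in> P \<Longrightarrow> v \<in> Dset (H p) (c p)"
  shows "concave_on U (Ffun P w H c h)"
proof -
  have cvU: "convex U" using assms(6) by (rule polytope_imp_convex)
  have cpU: "compact U" using assms(6) by (rule polytope_imp_compact)
  have KM: "U = convex hull {x. x extreme_point_of U}"
    by (rule Krein_Milman_Minkowski[OF cpU cvU])
  have conc: "concave_on U (Bfun (H p) (c p) (h p))" if pP: "p \<in> P" for p
  proof -
    have sym: "transpose (H p) = H p" using assms(2)[OF pP] .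
    have ps: "psd (H p)" using assms(3)[OF pP] .
    obtain z where cz: "c p = H p *v z" using assms(4)[OF pP] by auto
    define E where "E = {u. (2 *\<^sub>R u + z) \<bullet> (H p *v (2 *\<^sub>R u + z)) \<le> 2}"
    have cE: "convex E" unfolding E_def by (rule E_convex[OF sym ps])
    have cX: "c p \<bullet> (pinv (H p) *v c p) = z \<bullet> (H p *v z)"
    proof -
      have pi: "H p ** pinv (H p) ** H p = H p"
        using pinv_is_pinv[OF sym] by (simp add: is_pinv_def)
      have "c p \<bullet> (pinv (H p) *v c p) = z \<bullet> (H p *v (pinv (H p) *v (H p *v z)))"
        unfolding cz by (simp add: sym_inner[OF sym])
      also have "\<dots> = z \<bullet> ((H p ** pinv (H p) ** H p) *v z)"
        by (simp only: matrix_vector_mul_assoc matrix_mul_assoc)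
      finally show ?thesis unfolding pi .
    qed
    have DE: "v \<in> E" if "v \<in> Dset (H p) (c p)" for v
    proof -
      have d: "v \<bullet> (H p *v v) + c p \<bullet> v + (1/4) * (z \<bullet> (H p *v z)) \<le> 1/2"
        using that cX by (simp add: Dset_def)
      have cv: "c p \<bullet> v = v \<bullet> (H p *v z)" unfolding cz by (simp add: inner_commute)
      have s1: "(2 *\<^sub>R v) \<bullet> (H p *v (2 *\<^sub>R v)) = 4 * (v \<bullet> (H p *v v))"
        by (simp add: matrix_vector_mult_scaleR)
      have s2: "(2 *\<^sub>R v) \<bullet> (H p *v z) = 2 * (v \<bullet> (H p *v z))" by simp
      have "(2 *\<^sub>R v + z) \<bullet> (H p *v (2 *\<^sub>R v + z)) = 4 * (v \<bullet> (H p *v v) + c p \<bullet> v + (1/4) * (z \<bullet> (H p *v z)))"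
        unfolding quad_add[OF sym] s1 s2 cv by simp
      then show ?thesis unfolding E_def using d by simp
    qed
    have "{x. x extreme_point_of U} \<subseteq> E" using DE assms(7)[OF _ pP] by blast
    then have "U \<subseteq> E" using KM cE by (metis hull_minimal)
    then show ?thesis
      by (intro B_concave[OF sym ps cz cvU]) (auto simp: E_def)
  qed
  show ?thesis unfolding concave_on_iff
  proof (intro conjI cvU ballI allI impI)
    fix x y and u v :: real
    assume xy: "x \<in> U" "y \<in> U" "0 \<le> u" "0 \<le> v" "u + v = 1"
    have "u * Ffun P w H c h x + v * Ffun P w H c h y
        = (\<Sum>p\<in>P. w p * (u * Bfun (H p) (c p) (h p) x + v * Bfun (H p) (c p) (h p) y))"
      unfolding Ffun_def by (simp add: sum_distrib_left sum.distrib algebra_simps)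
    also have "\<dots> \<le> (\<Sum>p\<in>P. w p * Bfun (H p) (c p) (h p) (u *\<^sub>R x + v *\<^sub>R y))"
    proof (rule sum_mono)
      fix p assume pP: "p \<in> P"
      have "u * Bfun (H p) (c p) (h p) x + v * Bfun (H p) (c p) (h p) y
            \<le> Bfun (H p) (c p) (h p) (u *\<^sub>R x + v *\<^sub>R y)"
        using conc[OF pP] xy unfolding concave_on_iff by blast
      then show "w p * (u * Bfun (H p) (c p) (h p) x + v * Bfun (H p) (c p) (h p) y)
            \<le> w p * Bfun (H p) (c p) (h p) (u *\<^sub>R x + v *\<^sub>R y)"
        using assms(5)[OF pP] by (rule mult_left_mono)
    qed
    finally show "u * Ffun P w H c h x + v * Ffun P w H c h y \<le> Ffun P w H c h (u *\<^sub>R x + v *\<^sub>R y)"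
      unfolding Ffun_def .
  qed
qed

end
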